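(* Let $n\ge 1$. For $0\le j\le n-1$ let $P_j=\{Q\in\mathrm{Sym}_n(\mathbb{R}) : \mathrm{i}^-(Q)\le j\}$ and let $A_j=\partial P_j$ be its topological boundary in $\mathrm{Sym}_n(\mathbb{R})$. For $r\ge 0$ let $Z^{(r)}=\{Q\in\mathrm{Sym}_n(\mathbb{R}) : \dim\ker(Q)\ge r\}$, and let $I_r$ be the set of all subsets $\alpha\subseteq\{0,\dots,n-1\}$ consisting of $r$ consecutive integers. Then for every $r\ge 0$, $$Z^{(r)}=\bigcup_{\alpha\in I_r}\ \bigcap_{j\in\alpha} A_j .$$
   Context: $\mathrm{Sym}_n(\mathbb{R})$ is the space of real symmetric $n\times n$ matrices; $\mathrm{i}^-(Q)$ denotes the number of negative eigenvalues of $Q$ (negative inertia index). An intersection over the empty index set is understood to be all of $\mathrm{Sym}_n(\mathbb{R})$. *)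

theory Defs
  imports "HOL-Analysis.Analysis" "HOL-Computational_Algebra.Polynomial"
begin

text \<open>Real symmetric n x n matrices, with n = CARD('n).\<close>
definition Sym :: "(real^'n^'n) set" where
  "Sym = {Q. transpose Q = Q}"

definition charpoly :: "real^'n^'n \<Rightarrow> real poly" where
  "charpoly Q = det (\<chi> i j. (if i = j then [:0, 1:] else 0) - [:Q $ i $ j:])"

definition neg_index :: "real^'n^'n \<Rightarrow> nat" where
  "neg_index Q = (\<Sum>x\<in>{x::real. x < 0 \<and> poly (charpoly Q) x = 0}. order x (charpoly Q))"

definition P_set :: "nat \<Rightarrow> (real^'n^'n) set" where
  "P_set j = {Q \<in> Sym. neg_index Q \<le> j}"

definition A_set :: "nat \<Rightarrow> (real^'n^'n) set" where
  "A_set j = (subtopology euclidean Sym) frontier_of (P_set j)"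

definition Z_set :: "nat \<Rightarrow> (real^'n^'n) set" where
  "Z_set r = {Q \<in> Sym. dim {x. Q *v x = 0} \<ge> r}"

definition I_set :: "nat \<Rightarrow> nat \<Rightarrow> nat set set" where
  "I_set n r = {\<alpha>. \<exists>a. \<alpha> = {a..<a + r} \<and> a + r \<le> n}"

end

theory Submission
  imports Defs
begin


definition diagm :: "('n \<Rightarrow> real) \<Rightarrow> real^'n^'n" where
  "diagm d = (\<chi> i j. if i = j then d i else 0)"

definition qf :: "real^'n^'n \<Rightarrow> real^'n \<Rightarrow> real" where
  "qf Q x = x \<bullet> (Q *v x)"

lemma Sym_inner:
  assumes "Q \<in> Sym" shows "x \<bullet> (Q *v y) = (Q *v x) \<bullet> y"
proof -
  have tQ: "transpose Q = Q" using assms by (simp add: Sym_def)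
  have "Q *v x = x v* Q" using transpose_matrix_vector[of Q x] tQ by simp
  then show ?thesis by (simp add: dot_lmul_matrix)
qed

lemma qf_scale: "qf Q (a *\<^sub>R x) = a^2 * qf Q x"
  by (simp add: qf_def matrix_vector_mult_scaleR power2_eq_square)

lemma qf_add: "qf Q (a + b) = qf Q a + a \<bullet> (Q *v b) + b \<bullet> (Q *v a) + qf Q b"
  by (simp add: qf_def matrix_vector_right_distrib inner_add_left inner_add_right)

lemma eigvec_exists:
  assumes Q: "Q \<in> Sym" and S: "subspace S" "S \<noteq> {0}" and inv: "\<forall>x\<in>S. Q *v x \<in> S"
  obtains v c where "v \<in> S" "norm v = 1" "Q *v v = c *\<^sub>R v"
proof -
  let ?K = "S \<inter> sphere 0 1"
  have cK: "compact ?K"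
    by (simp add: S(1) closed_Int_compact closed_subspace)
  obtain s where s: "s \<in> S" "s \<noteq> 0" using S subspace_0 by blast
  have "(1 / norm s) *\<^sub>R s \<in> ?K" using s S(1)
    by (simp add: subspace_scale)
  then have neK: "?K \<noteq> {}" by blast
  have ct: "continuous_on ?K (qf Q)"
    unfolding qf_def by (intro continuous_intros)
  have "\<exists>v\<in>?K. \<forall>y\<in>?K. qf Q y \<le> qf Q v"
    by (rule continuous_attains_sup[OF cK neK ct])
  then obtain v where v: "v \<in> ?K" "\<And>y. y \<in> ?K \<Longrightarrow> qf Q y \<le> qf Q v"
    by (elim bexE) simp
  define c where "c = qf Q v"
  define y where "y = Q *v v - c *\<^sub>R v"
  have vS: "v \<in> S" and nv: "norm v = 1" using v(1) by auto
  have vv: "v \<bullet> v = 1" using nv by (simp add: norm_eq_1)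
  have yS: "y \<in> S" unfolding y_def using vS inv S(1)
    by (simp add: subspace_diff subspace_scale)
  have yv: "y \<bullet> v = 0" unfolding y_def c_def qf_def
    by (simp add: inner_diff_left inner_diff_right vv inner_commute)
  have yQv: "y \<bullet> (Q *v v) = y \<bullet> y"
  proof -
    have "Q *v v = y + c *\<^sub>R v" unfolding y_def by simp
    then show ?thesis using yv by (simp add: inner_add_right)
  qed
  have "y = 0"
  proof (rule ccontr)
    assume yne: "y \<noteq> 0"
    define w where "w = y \<bullet> y"
    have wpos: "w > 0" unfolding w_def using yne by simp
    define e where "e = y \<bullet> (Q *v y)"
    define K where "K = c * w - e"
    define t where "t = w / (\<bar>K\<bar> + 1)"
    have tpos: "t > 0" unfolding t_def using wpos by simp
    define z where "z = v + t *\<^sub>R y"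
    have vy: "v \<bullet> y = 0" using yv by (simp add: inner_commute)
    have zz: "z \<bullet> z = 1 + t^2 * w"
      unfolding z_def w_def
      by (simp add: inner_add_left inner_add_right vv yv vy power2_eq_square)
    have nz: "norm z ^ 2 = 1 + t^2 * w" using zz by (simp add: power2_norm_eq_inner)
    have "z \<bullet> v = 1" unfolding z_def using vv yv by (simp add: inner_add_left)
    then have "z \<noteq> 0" by auto
    then have zpos: "norm z > 0" by simp
    have vQy: "v \<bullet> (Q *v y) = y \<bullet> y"
      using Sym_inner[OF Q, of v y] yQv by (simp add: inner_commute)
    have qz: "qf Q z = c + 2 * t * w + t^2 * e"
      unfolding z_def qf_add
      by (simp add: qf_scale matrix_vector_mult_scaleR vQy yQv c_def w_def e_def qf_def[of Q y])
    have "(1 / norm z) *\<^sub>R z \<in> ?K" using zpos vS yS S(1)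
      unfolding z_def by (simp add: subspace_scale subspace_add)
    then have "qf Q ((1 / norm z) *\<^sub>R z) \<le> c" using v(2) c_def by blast
    then have "qf Q z / norm z ^ 2 \<le> c" by (simp add: qf_scale power_divide)
    moreover have "norm z ^ 2 > 0" using zpos by simp
    ultimately have "qf Q z \<le> c * norm z ^ 2" by (simp add: pos_divide_le_eq)
    then have ineq: "c + 2 * t * w + t^2 * e \<le> c * (1 + t^2 * w)" using qz nz by simp
    have eq1: "t * (t * K) = c * (t^2 * w) - t^2 * e"
      unfolding K_def power2_eq_square by algebra
    have eq2: "c * (1 + t^2 * w) = c + c * (t^2 * w)" by algebra
    have "t * (2 * w) \<le> t * (t * K)" using ineq eq1 eq2 by linarith
    then have "2 * w \<le> t * K" using tpos by simp
    also have "t * K \<le> t * \<bar>K\<bar>" using tpos by (simp add: mult_left_mono)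
    also have "t * \<bar>K\<bar> < w"
    proof -
      have "t * (\<bar>K\<bar> + 1) = w" unfolding t_def
        by (metis abs_ge_zero add_nonneg_pos nonzero_eq_divide_eq order_less_irrefl zero_less_one)
      then show ?thesis using tpos by (simp add: distrib_left)
    qed
    finally show False using wpos by simp
  qed
  then have "Q *v v = c *\<^sub>R v" unfolding y_def by simp
  then show ?thesis using that vS nv by blast
qed



lemma spectral_sub:
  assumes Q: "Q \<in> Sym"
  shows "subspace S \<Longrightarrow> (\<forall>x\<in>S. Q *v x \<in> S) \<Longrightarrow>
    \<exists>B. B \<subseteq> S \<and> span B = S \<and> pairwise orthogonal B \<and>
        (\<forall>b\<in>B. norm b = 1 \<and> (\<exists>c. Q *v b = c *\<^sub>R b))"
proof (induction "dim S" arbitrary: S rule: less_induct)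
  case less
  show ?case
  proof (cases "S = {0}")
    case True
    then show ?thesis by (intro exI[of _ "{}"]) auto
  next
    case False
    obtain v c where v: "v \<in> S" "norm v = 1" "Q *v v = c *\<^sub>R v"
      using eigvec_exists[OF Q less.prems(1) False less.prems(2)] by blast
    have vv: "v \<bullet> v = 1" using v(2) by (simp add: norm_eq_1)
    define S' where "S' = S \<inter> {y. v \<bullet> y = 0}"
    have sS': "subspace S'" unfolding S'_def
      by (intro subspace_inter less.prems(1) subspace_hyperplane)
    have iS': "\<forall>x\<in>S'. Q *v x \<in> S'"
    proof
      fix x assume x: "x \<in> S'"
      have "v \<bullet> (Q *v x) = (Q *v v) \<bullet> x" by (rule Sym_inner[OF Q])
      also have "\<dots> = 0" using x v(3) by (simp add: S'_def)
      finally show "Q *v x \<in> S'" using x less.prems(2) by (simp add: S'_def)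
    qed
    have "v \<notin> S'" using vv by (simp add: S'_def)
    then have sub: "S' \<subset> S" using v(1) unfolding S'_def by blast
    have "dim S' < dim S"
      using dim_psubset[of S' S] sub sS' less.prems(1) by (simp add: span_eq_iff[THEN iffD2])
    then obtain B' where B': "B' \<subseteq> S'" "span B' = S'" "pairwise orthogonal B'"
        "\<forall>b\<in>B'. norm b = 1 \<and> (\<exists>c. Q *v b = c *\<^sub>R b)"
      using less.hyps[OF _ sS' iS'] by blast
    define B where "B = insert v B'"
    have "B \<subseteq> S" using B'(1) v(1) unfolding B_def S'_def by auto
    moreover have "span B = S"
    proof
      show "span B \<subseteq> S" using \<open>B \<subseteq> S\<close> less.prems(1) by (simp add: span_minimal)
      show "S \<subseteq> span B"
      proof
        fix s assume s: "s \<in> S"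
        define s' where "s' = s - (v \<bullet> s) *\<^sub>R v"
        have "v \<bullet> s' = 0" unfolding s'_def using vv by (simp add: inner_diff_right)
        moreover have "s' \<in> S" unfolding s'_def using s v(1) less.prems(1)
          by (simp add: subspace_diff subspace_scale)
        ultimately have "s' \<in> S'" by (simp add: S'_def)
        then have "s' \<in> span B" using B'(2) span_mono[of B' B] unfolding B_def by blast
        moreover have "(v \<bullet> s) *\<^sub>R v \<in> span B" unfolding B_def
          by (simp add: span_base span_scale)
        ultimately have "s' + (v \<bullet> s) *\<^sub>R v \<in> span B" by (rule span_add)
        then show "s \<in> span B" by (simp add: s'_def)
      qed
    qed
    moreover have "pairwise orthogonal B"
    proof -
      have "\<forall>b\<in>B'. orthogonal v b \<and> orthogonal b v"
        using B'(1) unfolding S'_def orthogonal_def by (auto simp: inner_commute)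
      then show ?thesis unfolding B_def using B'(3) by (auto simp: pairwise_insert)
    qed
    moreover have "\<forall>b\<in>B. norm b = 1 \<and> (\<exists>c. Q *v b = c *\<^sub>R b)"
      using B'(4) v unfolding B_def by blast
    ultimately show ?thesis by blast
  qed
qed

lemma spectral:
  fixes Q :: "real^'n^'n"
  assumes Q: "Q \<in> Sym"
  obtains P d where "orthogonal_matrix P" "Q = P ** diagm d ** transpose P"
proof -
  obtain B where B: "span B = UNIV" "pairwise orthogonal B"
      "\<forall>b\<in>B. norm b = 1 \<and> (\<exists>c. Q *v b = c *\<^sub>R b)"
    using spectral_sub[OF Q, of UNIV] by auto
  have 0: "0 \<notin> B" using B(3) by force
  have ind: "independent B" by (rule pairwise_orthogonal_independent[OF B(2) 0])
  have fin: "finite B" using ind by (rule finiteI_independent)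
  have "card B = dim (span B)" using dim_span_eq_card_independent[OF ind] by simp
  also have "\<dots> = CARD('n)" using B(1) by simp
  finally have cB: "card B = CARD('n)" .
  obtain f where f: "bij_betw f (UNIV::'n set) B"
    using finite_same_card_bij[of "UNIV::'n set" B] fin cB by auto
  have fB: "f i \<in> B" for i using f bij_betwE by blast
  have inj: "inj f" using f bij_betw_def by blast
  have fn: "f i \<bullet> f j = (if i = j then 1 else 0)" for i j
  proof (cases "i = j")
    case True then show ?thesis using B(3) fB by (simp add: norm_eq_1)
  next
    case False then have "f i \<noteq> f j" using inj by (metis injD)
    then show ?thesis using B(2) fB False unfolding pairwise_def orthogonal_def by auto
  qed
  define d where "d i = f i \<bullet> (Q *v f i)" for i
  have fe: "Q *v f i = d i *\<^sub>R f i" for i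
  proof -
    obtain c where c: "Q *v f i = c *\<^sub>R f i" using B(3) fB by blast
    then have "d i = c" using fn[of i i] by (simp add: d_def)
    then show ?thesis using c by simp
  qed
  define P where "P = (\<chi> i j. f j $ i)"
  have "(transpose P ** P) $ i $ j = mat 1 $ i $ j" for i j
  proof -
    have "(transpose P ** P) $ i $ j = (\<Sum>k\<in>UNIV. f i $ k * f j $ k)"
      by (simp add: P_def matrix_matrix_mult_def transpose_def)
    also have "\<dots> = f i \<bullet> f j" by (simp add: inner_vec_def)
    also have "\<dots> = mat 1 $ i $ j" by (simp add: fn mat_def)
    finally show ?thesis .
  qed
  then have PtP: "transpose P ** P = mat 1" by (simp add: vec_eq_iff)
  then have oP: "orthogonal_matrix P" by (simp add: orthogonal_matrix)
  have QP: "Q ** P = P ** diagm d"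
  proof -
    have "(Q ** P) $ i $ j = (P ** diagm d) $ i $ j" for i j
    proof -
      have "(Q ** P) $ i $ j = (Q *v f j) $ i"
        by (simp add: matrix_matrix_mult_def matrix_vector_mult_def P_def)
      also have "\<dots> = d j * f j $ i" by (simp add: fe)
      also have "\<dots> = (\<Sum>k\<in>UNIV. if k = j then f k $ i * d k else 0)" by simp
      also have "\<dots> = (\<Sum>k\<in>UNIV. f k $ i * (if k = j then d k else 0))"
        by (intro sum.cong) auto
      also have "\<dots> = (P ** diagm d) $ i $ j"
        by (simp add: matrix_matrix_mult_def diagm_def P_def)
      finally show ?thesis .
    qed
    then show ?thesis by (simp add: vec_eq_iff)
  qed
  have "Q = Q ** (P ** transpose P)" using oP by (simp add: orthogonal_matrix_def)
  also have "\<dots> = P ** diagm d ** transpose P" by (simp add: matrix_mul_assoc QP)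
  finally show ?thesis using that oP by blast
qed



definition decomp :: "real^'n^'n \<Rightarrow> real^'n^'n \<Rightarrow> ('n \<Rightarrow> real) \<Rightarrow> bool" where
  "decomp Q P d \<longleftrightarrow> orthogonal_matrix P \<and> Q = P ** diagm d ** transpose P"

lemma poly_det: "poly (det A) x = det (\<chi> i j. poly (A$i$j) x)"
  by (simp add: det_def poly_sum poly_prod)

lemma conj_entry:
  fixes P :: "real^'n^'n" and e :: "'n \<Rightarrow> real"
  shows
  "(P ** diagm e ** transpose P) $ i $ j = (\<Sum>k\<in>UNIV. P$i$k * e k * P$j$k)"
proof -
  have "(P ** diagm e ** transpose P) $ i $ j = (\<Sum>k\<in>UNIV. (\<Sum>l\<in>UNIV. P$i$l * (if l = k then e l else 0)) * P$j$k)"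
    by (simp add: matrix_matrix_mult_def diagm_def transpose_def)
  also have "\<dots> = (\<Sum>k\<in>UNIV. P$i$k * e k * P$j$k)"
  proof (rule sum.cong)
    fix k :: 'n
    have "(\<Sum>l\<in>UNIV. P$i$l * (if l = k then e l else 0)) = (\<Sum>l\<in>UNIV. if l = k then P$i$l * e l else 0)"
      by (intro sum.cong) auto
    then show "(\<Sum>l\<in>UNIV. P$i$l * (if l = k then e l else 0)) * P$j$k = P$i$k * e k * P$j$k" by simp
  qed simp
  finally show ?thesis .
qed

lemma PPt_entry: "orthogonal_matrix P \<Longrightarrow> (\<Sum>k\<in>UNIV. P$i$k * P$j$k) = (if i = j then 1 else 0)"
proof -
  assume "orthogonal_matrix P"
  then have "P ** transpose P = mat 1" by (simp add: orthogonal_matrix_def)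
  then have "(P ** transpose P) $ i $ j = mat 1 $ i $ j" by simp
  then show ?thesis by (simp add: matrix_matrix_mult_def transpose_def mat_def)
qed

lemma det_conj:
  assumes "orthogonal_matrix P" shows "det (P ** A ** transpose P) = det A"
proof -
  have "det (P ** A ** transpose P) = det A * det (P ** transpose P)"
    by (simp add: det_mul)
  also have "P ** transpose P = mat 1" using assms by (simp add: orthogonal_matrix_def)
  finally show ?thesis by simp
qed

lemma det_diagm: "det (diagm d) = (\<Prod>i\<in>UNIV. d i)"
  by (subst det_diagonal) (simp_all add: diagm_def)

lemma decomp_shift:
  assumes "decomp Q P d"
  shows "(\<chi> i j. (if i = j then x else 0) - Q$i$j) = P ** diagm (\<lambda>k. x - d k) ** transpose P"
proof -
  have oP: "orthogonal_matrix P" and Qe: "Q = P ** diagm d ** transpose P"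
    using assms by (auto simp: decomp_def)
  have "(if i = j then x else 0) - Q$i$j = (P ** diagm (\<lambda>k. x - d k) ** transpose P) $ i $ j" for i j
  proof -
    have "(P ** diagm (\<lambda>k. x - d k) ** transpose P) $ i $ j
        = x * (\<Sum>k\<in>UNIV. P$i$k * P$j$k) - (\<Sum>k\<in>UNIV. P$i$k * d k * P$j$k)"
      unfolding conj_entry by (simp add: sum_distrib_left sum_subtractf algebra_simps)
    also have "\<dots> = (if i = j then x else 0) - Q$i$j"
    proof -
      have "Q$i$j = (\<Sum>k\<in>UNIV. P$i$k * d k * P$j$k)" using Qe conj_entry by simp
      then show ?thesis using PPt_entry[OF oP, of i j] by simp
    qed
    finally show ?thesis by simp
  qed
  then show ?thesis by (simp add: vec_eq_iff)
qed

lemma charpoly_decomp: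
  assumes "decomp Q P d"
  shows "charpoly Q = (\<Prod>j\<in>UNIV. [:- d j, 1:])"
proof -
  have oP: "orthogonal_matrix P" using assms by (simp add: decomp_def)
  have "poly (charpoly Q) x = poly (\<Prod>j\<in>UNIV. [:- d j, 1:]) x" for x
  proof -
    have "(\<chi> i j. poly (((\<chi> i j. (if i = j then [:0, 1:] else 0) - [:Q $ i $ j:]) :: real poly^'a^'a) $ i $ j) x)
        = (\<chi> i j. (if i = j then x else 0) - Q$i$j)"
      by (simp add: vec_eq_iff)
    then have "poly (charpoly Q) x = det (\<chi> i j. (if i = j then x else 0) - Q$i$j)"
      unfolding charpoly_def poly_det by simp
    also have "\<dots> = (\<Prod>j\<in>UNIV. x - d j)"
      unfolding decomp_shift[OF assms] det_conj[OF oP] det_diagm by simp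
    finally show ?thesis by (simp add: poly_prod)
  qed
  then show ?thesis using poly_eq_poly_eq_iff by blast
qed

lemma order_prod_lin:
  "finite I \<Longrightarrow> order x (\<Prod>j\<in>I. [:- d j, 1:]) = card {j\<in>I. d j = (x::real)}"
proof (induction I rule: finite_induct)
  case empty show ?case by simp
next
  case (insert j I)
  have fi: "finite (insert j I)" using insert.hyps by simp
  have ne: "(\<Prod>k\<in>insert j I. [:- d k, 1:]) \<noteq> 0"
    using prod_zero_iff[OF fi, of "\<lambda>k. [:- d k, 1:]"] by auto
  have "order x (\<Prod>k\<in>insert j I. [:- d k, 1:]) = order x [:- d j, 1:] + order x (\<Prod>k\<in>I. [:- d k, 1:])"
  proof -
    have pe: "(\<Prod>k\<in>insert j I. [:- d k, 1:]) = [:- d j, 1:] * (\<Prod>k\<in>I. [:- d k, 1:])"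
      by (rule prod.insert[OF insert.hyps])
    show ?thesis using ne unfolding pe by (rule order_mult)
  qed
  also have "order x [:- d j, 1:] = (if d j = x then 1 else 0)"
  proof (cases "d j = x")
    case True then show ?thesis using order_power_n_n[of x 1] by simp
  next
    case False then have "poly [:- d j, 1:] x \<noteq> 0" by simp
    from order_0I[OF this] False show ?thesis by simp
  qed
  also have "card {k\<in>insert j I. d k = x} = (if d j = x then 1 else 0) + card {k\<in>I. d k = x}"
  proof (cases "d j = x")
    case True
    then have "{k\<in>insert j I. d k = x} = insert j {k\<in>I. d k = x}" by auto
    then show ?thesis using True insert.hyps by simp
  next
    case False
    then have "{k\<in>insert j I. d k = x} = {k\<in>I. d k = x}" by auto
    then show ?thesis using False by simp
  qed
  ultimately show ?case using insert.IH by simp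
qed

lemma neg_index_decomp:
  assumes "decomp Q P d"
  shows "neg_index Q = card {j. d j < 0}"
proof -
  let ?N = "{j. d j < 0}"
  have cp: "charpoly Q = (\<Prod>j\<in>UNIV. [:- d j, 1:])" by (rule charpoly_decomp[OF assms])
  have roots: "{x. x < 0 \<and> poly (charpoly Q) x = 0} = d ` ?N"
    unfolding cp by (auto simp: poly_prod)
  have "neg_index Q = (\<Sum>x\<in>d ` ?N. card {j. d j = x})"
    unfolding neg_index_def roots unfolding cp by (simp add: order_prod_lin)
  also have "\<dots> = (\<Sum>x\<in>d ` ?N. card {j. j \<in> ?N \<and> d j = x})"
    by (intro sum.cong refl arg_cong[where f=card]) auto
  also have "\<dots> = card ?N"
    using sum.image_gen[of ?N "\<lambda>_. 1::nat" d] by simp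
  finally show ?thesis .
qed



declare transpose_matrix_vector[simp del]

lemma card_Compl:
  "finite A \<Longrightarrow> card (- A) = card (UNIV :: 'a set) - card (A :: 'a set)"
  by (metis Compl_eq_Diff_UNIV card_Diff_subset top_greatest)

lemma diagm_mult: "(diagm d *v (y::real^'n)) $ j = d j * y $ j"
proof -
  have "(diagm d *v y) $ j = (\<Sum>k\<in>UNIV. (if j = k then d j else 0) * y $ k)"
    by (simp add: matrix_vector_mult_def diagm_def)
  also have "\<dots> = (\<Sum>k\<in>UNIV. if j = k then d j * y $ k else 0)"
    by (intro sum.cong) auto
  finally show ?thesis by simp
qed

lemma decomp_orth: "decomp Q P d \<Longrightarrow> orthogonal_matrix P" by (simp add: decomp_def)

lemma tPP: "orthogonal_matrix P \<Longrightarrow> transpose P ** P = mat 1"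
  by (simp add: orthogonal_matrix_def)
lemma PtP: "orthogonal_matrix P \<Longrightarrow> P ** transpose P = mat 1"
  by (simp add: orthogonal_matrix_def)

lemma inner_P: fixes P :: "real^'n^'n" shows "x \<bullet> (P *v w) = (transpose P *v x) \<bullet> w"
  by (simp add: transpose_matrix_vector dot_lmul_matrix)

lemma qf_decomp:
  assumes "decomp Q P d"
  shows "qf Q x = (\<Sum>j\<in>UNIV. d j * ((transpose P *v x) $ j)^2)"
proof -
  let ?y = "transpose P *v x"
  have Qe: "Q = P ** diagm d ** transpose P" using assms by (simp add: decomp_def)
  have "Q *v x = P *v (diagm d *v ?y)" unfolding Qe by (simp add: matrix_vector_mul_assoc matrix_mul_assoc)
  then have "qf Q x = ?y \<bullet> (diagm d *v ?y)" by (simp add: qf_def inner_P)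
  also have "\<dots> = (\<Sum>j\<in>UNIV. d j * (?y $ j)^2)"
  proof -
    have "(diagm d *v ?y) $ j = d j * ?y $ j" for j by (rule diagm_mult)
    then show ?thesis by (simp add: inner_vec_def power2_eq_square algebra_simps)
  qed
  finally show ?thesis .
qed

lemma norm_P:
  fixes P :: "real^'n^'n"
  assumes "orthogonal_matrix P"
  shows "norm (transpose P *v x) = norm x"
proof -
  have "(transpose P *v x) \<bullet> (transpose P *v x) = x \<bullet> x"
  proof -
    have "x \<bullet> (P *v (transpose P *v x)) = (transpose P *v x) \<bullet> (transpose P *v x)"
      by (rule inner_P)
    moreover have "P *v (transpose P *v x) = x" using PtP[OF assms] by (simp add: matrix_vector_mul_assoc)
    ultimately show ?thesis by simp
  qed
  then show ?thesis by (simp add: norm_eq_sqrt_inner)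
qed

lemma sum_sq_norm: "(\<Sum>j\<in>UNIV. ((y::real^'n) $ j)^2) = norm y ^ 2"
  unfolding power2_norm_eq_inner inner_vec_def by (simp add: power2_eq_square)

lemma dim_Sub:
  fixes P :: "real^'n^'n"
  assumes oP: "orthogonal_matrix P"
  shows "dim {x. \<forall>j\<in>J. (transpose P *v x) $ j = 0} = CARD('n) - card J"
proof -
  let ?Z = "{y::real^'n. \<forall>i. i \<notin> (- J) \<longrightarrow> y $ i = 0}"
  have eq: "{x. \<forall>j\<in>J. (transpose P *v x) $ j = 0} = (\<lambda>y. P *v y) ` ?Z"
  proof (intro set_eqI iffI)
    fix x assume x: "x \<in> {x. \<forall>j\<in>J. (transpose P *v x) $ j = 0}"
    have "x = P *v (transpose P *v x)" using PtP[OF oP] by (simp add: matrix_vector_mul_assoc)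
    moreover have "transpose P *v x \<in> ?Z" using x by auto
    ultimately show "x \<in> (\<lambda>y. P *v y) ` ?Z" by blast
  next
    fix x assume "x \<in> (\<lambda>y. P *v y) ` ?Z"
    then obtain y where y: "y \<in> ?Z" "x = P *v y" by blast
    have "transpose P *v x = y" using y(2) tPP[OF oP] by (simp add: matrix_vector_mul_assoc)
    then show "x \<in> {x. \<forall>j\<in>J. (transpose P *v x) $ j = 0}" using y(1) by auto
  qed
  have inj: "inj_on (\<lambda>y. P *v y) (span ?Z)"
  proof (rule inj_onI)
    fix a b assume "P *v a = P *v b"
    then have "transpose P *v (P *v a) = transpose P *v (P *v b)" by simp
    then show "a = b" using tPP[OF oP] by (simp add: matrix_vector_mul_assoc)
  qed
  have "dim ((\<lambda>y. P *v y) ` ?Z) = dim ?Z"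
    by (rule dim_image_eq[OF matrix_vector_mul_linear inj])
  also have "dim ?Z = card (- J)"
    unfolding dim_vec_eq[symmetric] by (rule dim_substandard_cart)
  also have "card (- J) = CARD('n) - card J" by (simp add: card_Compl)
  finally show ?thesis using eq by simp
qed

lemma decomp_neg:
  assumes "decomp Q P d" shows "decomp (-Q) P (\<lambda>k. - d k)"
proof -
  have oP: "orthogonal_matrix P" and Qe: "Q = P ** diagm d ** transpose P"
    using assms by (auto simp: decomp_def)
  have "(-Q) $ i $ j = (P ** diagm (\<lambda>k. - d k) ** transpose P) $ i $ j" for i j
    unfolding conj_entry using Qe conj_entry[of P d i j] by (simp add: sum_negf)
  then show ?thesis using oP by (simp add: decomp_def vec_eq_iff)
qed

lemma decomp_shift2:
  assumes "decomp Q P d" shows "decomp (Q - e *\<^sub>R mat 1) P (\<lambda>k. d k - e)"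
proof -
  have oP: "orthogonal_matrix P" and Qe: "Q = P ** diagm d ** transpose P"
    using assms by (auto simp: decomp_def)
  have "(Q - e *\<^sub>R mat 1) $ i $ j = (P ** diagm (\<lambda>k. d k - e) ** transpose P) $ i $ j" for i j
  proof -
    have "(P ** diagm (\<lambda>k. d k - e) ** transpose P) $ i $ j
        = (\<Sum>k\<in>UNIV. P$i$k * d k * P$j$k) - e * (\<Sum>k\<in>UNIV. P$i$k * P$j$k)"
      unfolding conj_entry by (simp add: sum_distrib_left sum_subtractf algebra_simps)
    also have "\<dots> = (Q - e *\<^sub>R mat 1) $ i $ j"
      using Qe conj_entry[of P d i j] PPt_entry[OF oP, of i j] by (simp add: mat_def)
    finally show ?thesis by simp
  qed
  then show ?thesis using oP by (simp add: decomp_def vec_eq_iff)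
qed

lemma ker_decomp:
  fixes Q :: "real^'n^'n"
  assumes "decomp Q P d"
  shows "dim {x. Q *v x = 0} = card {j. d j = 0}"
proof -
  have oP: "orthogonal_matrix P" and Qe: "Q = P ** diagm d ** transpose P"
    using assms by (auto simp: decomp_def)
  have "{x. Q *v x = 0} = {x. \<forall>j\<in>{j. d j \<noteq> 0}. (transpose P *v x) $ j = 0}"
  proof (intro set_eqI)
    fix x
    let ?y = "transpose P *v x"
    have D: "(diagm d *v ?y) $ j = d j * ?y $ j" for j by (rule diagm_mult)
    have "Q *v x = P *v (diagm d *v ?y)" unfolding Qe by (simp add: matrix_vector_mul_assoc matrix_mul_assoc)
    moreover have "P *v w = 0 \<longleftrightarrow> w = 0" for w
    proof
      assume "P *v w = 0"
      then have "transpose P *v (P *v w) = 0" by simp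
      then show "w = 0" using tPP[OF oP] by (simp add: matrix_vector_mul_assoc)
    qed simp
    ultimately have "Q *v x = 0 \<longleftrightarrow> (\<forall>j. d j * ?y $ j = 0)" by (simp add: vec_eq_iff D)
    then show "x \<in> {x. Q *v x = 0} \<longleftrightarrow> x \<in> {x. \<forall>j\<in>{j. d j \<noteq> 0}. (transpose P *v x) $ j = 0}"
      by auto
  qed
  then have "dim {x. Q *v x = 0} = CARD('n) - card {j. d j \<noteq> 0}"
    using dim_Sub[OF oP, of "{j. d j \<noteq> 0}"] by (simp only:)
  also have "\<dots> = card {j. d j = 0}"
  proof -
    have "{j. d j \<noteq> 0} = - {j. d j = 0}" by auto
    moreover have "card {j. d j = 0} \<le> CARD('n)" by (rule card_mono) auto
    ultimately show ?thesis by (simp add: card_Compl)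
  qed
  finally show ?thesis .
qed



lemma subspace_Sub: "subspace {x. \<forall>j\<in>J. ((transpose P :: real^'n^'n) *v x) $ j = 0}"
  unfolding subspace_def
  by (simp add: matrix_vector_right_distrib matrix_vector_mult_scaleR)

lemma card_lt_le: "card {j::'n::finite. d j < (0::real)} \<le> CARD('n)" by (rule card_mono) auto

lemma aux_mono: "(a::real) \<le> - c \<Longrightarrow> a * t^2 \<le> - c * t^2"
  by (rule mult_right_mono) simp_all

lemma negdef_dim:
  fixes Q :: "real^'n^'n"
  assumes dQ: "decomp Q P d" and sV: "subspace V" and neg: "\<forall>x\<in>V. x \<noteq> 0 \<longrightarrow> qf Q x < 0"
  shows "dim V \<le> card {j. d j < 0}"
proof -
  have oP: "orthogonal_matrix P" using dQ by (simp add: decomp_def)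
  let ?N = "{j. d j < 0}"
  let ?W = "{x. \<forall>j\<in>?N. (transpose P *v x) $ j = 0}"
  have sW: "subspace ?W" by (rule subspace_Sub)
  have Wnn: "qf Q x \<ge> 0" if "x \<in> ?W" for x
  proof -
    have "qf Q x = (\<Sum>j\<in>UNIV. d j * ((transpose P *v x) $ j)^2)" by (rule qf_decomp[OF dQ])
    also have "\<dots> \<ge> 0"
    proof (rule sum_nonneg)
      fix j :: 'n
      show "0 \<le> d j * ((transpose P *v x) $ j)^2"
      proof (cases "d j < 0")
        case True then show ?thesis using that by simp
      next
        case False then show ?thesis by simp
      qed
    qed
    finally show ?thesis .
  qed
  have VW: "V \<inter> ?W = {0}"
  proof
    show "V \<inter> ?W \<subseteq> {0}" using neg Wnn by force
    show "{0} \<subseteq> V \<inter> ?W" using subspace_0[OF sV] subspace_0[OF sW] by blast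
  qed
  have "dim {x + y |x y. x \<in> V \<and> y \<in> ?W} + dim (V \<inter> ?W) = dim V + dim ?W"
    by (rule dim_sums_Int[OF sV sW])
  moreover have "dim (V \<inter> ?W) = 0" unfolding VW by simp
  moreover have "dim {x + y |x y. x \<in> V \<and> y \<in> ?W} \<le> CARD('n)"
    using dim_subset_UNIV[of "{x + y |x y. x \<in> V \<and> y \<in> ?W}"] by simp
  moreover have "dim ?W = CARD('n) - card ?N" by (rule dim_Sub[OF oP])
  ultimately show ?thesis using card_lt_le[of d] by linarith
qed

lemma entry_le_norm: "\<bar>(M::real^'n^'m) $ i $ j\<bar> \<le> norm M"
  using component_le_norm_cart[where x="M $ i" and i=j] Finite_Cartesian_Product.norm_nth_le[where x=M and i=i]
  by linarith

lemma qf_perturb: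
  fixes Q Q' :: "real^'n^'n"
  shows "qf Q' x \<le> qf Q x + (real CARD('n) * real CARD('n)) * norm (Q' - Q) * norm x ^ 2"
proof -
  let ?M = "Q' - Q"
  have "qf Q' x - qf Q x = x \<bullet> (?M *v x)"
    by (simp add: qf_def matrix_vector_mult_diff_rdistrib inner_diff_right)
  also have "\<dots> \<le> norm x * norm (?M *v x)"
    using Cauchy_Schwarz_ineq2[of x "?M *v x"] by simp
  also have "norm (?M *v x) \<le> onorm ((*v) ?M) * norm x"
    by (rule onorm[OF matrix_vector_mul_bounded_linear])
  also have "onorm ((*v) ?M) \<le> (\<Sum>i\<in>UNIV. \<Sum>j\<in>UNIV. \<bar>?M $ i $ j\<bar>)"
    by (rule onorm_le_matrix_component_sum)
  also have "\<dots> \<le> (\<Sum>i\<in>(UNIV::'n set). \<Sum>j\<in>(UNIV::'n set). norm ?M)"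
    by (intro sum_mono entry_le_norm)
  also have "\<dots> = real CARD('n) * real CARD('n) * norm ?M" by simp
  finally have "qf Q' x - qf Q x \<le> norm x * ((real CARD('n) * real CARD('n) * norm ?M) * norm x)"
    by (simp add: mult_left_mono mult_right_mono)
  then show ?thesis by (simp add: power2_eq_square algebra_simps)
qed

lemma neg_open:
  fixes Q :: "real^'n^'n"
  assumes Q: "Q \<in> Sym"
  shows "\<exists>e>0. \<forall>Q'\<in>Sym. dist Q' Q < e \<longrightarrow> neg_index Q \<le> neg_index Q'"
proof -
  obtain P d where oP: "orthogonal_matrix P" and Qe: "Q = P ** diagm d ** transpose P"
    using spectral[OF Q] by blast
  have dQ: "decomp Q P d" using oP Qe by (simp add: decomp_def)
  let ?N = "{j. d j < 0}"
  let ?V = "{x. \<forall>j\<in>{j. \<not> d j < 0}. (transpose P *v x) $ j = 0}"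
  have sV: "subspace ?V" by (rule subspace_Sub)
  have dV: "dim ?V = card ?N"
  proof -
    have a: "dim ?V = CARD('n) - card {j. \<not> d j < 0}" by (rule dim_Sub[OF oP])
    have "{j. \<not> d j < 0} = - ?N" by auto
    then have "card {j. \<not> d j < 0} = CARD('n) - card ?N" by (simp add: card_Compl)
    then show ?thesis using a card_lt_le[of d] by linarith
  qed
  define c where "c = Min (insert 1 ((\<lambda>j. - d j) ` ?N))"
  have cpos: "c > 0" unfolding c_def by (subst Min_gr_iff) auto
  have cle: "c \<le> - d j" if "d j < 0" for j unfolding c_def using that by (intro Min_le) auto
  have qV: "qf Q x \<le> - c * norm x ^ 2" if x: "x \<in> ?V" for x
  proof -
    let ?y = "transpose P *v x"
    have "qf Q x = (\<Sum>j\<in>UNIV. d j * (?y $ j)^2)" by (rule qf_decomp[OF dQ])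
    also have "\<dots> \<le> (\<Sum>j\<in>UNIV. - c * (?y $ j)^2)"
    proof (rule sum_mono)
      fix j :: 'n
      show "d j * (?y $ j)^2 \<le> - c * (?y $ j)^2"
      proof (cases "d j < 0")
        case True show ?thesis by (rule aux_mono) (use cle[OF True] in linarith)
      next
        case False then show ?thesis using x by simp
      qed
    qed
    also have "\<dots> = - c * norm ?y ^ 2"
      by (simp only: sum_distrib_left[symmetric] sum_sq_norm)
    also have "norm ?y = norm x" by (rule norm_P[OF oP])
    finally show ?thesis .
  qed
  define C where "C = real CARD('n) * real CARD('n)"
  have C0: "C \<ge> 0" unfolding C_def by simp
  define e where "e = c / (C + 1)"
  have epos: "e > 0" unfolding e_def using cpos C0 by simp
  have Ce: "C * e < c" unfolding e_def using cpos C0 by (simp add: field_simps)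
  have "\<forall>Q'\<in>Sym. dist Q' Q < e \<longrightarrow> neg_index Q \<le> neg_index Q'"
  proof (intro ballI impI)
    fix Q' :: "real^'n^'n" assume Q': "Q' \<in> Sym" and dist: "dist Q' Q < e"
    obtain P' d' where oP': "orthogonal_matrix P'" and Qe': "Q' = P' ** diagm d' ** transpose P'"
      using spectral[OF Q'] by blast
    have dQ': "decomp Q' P' d'" using oP' Qe' by (simp add: decomp_def)
    have "\<forall>x\<in>?V. x \<noteq> 0 \<longrightarrow> qf Q' x < 0"
    proof (intro ballI impI)
      fix x assume x: "x \<in> ?V" and x0: "x \<noteq> 0"
      have nx: "norm x ^ 2 > 0" using x0 by simp
      have nm: "norm (Q' - Q) < e" using dist by (simp add: dist_norm)
      have "qf Q' x \<le> qf Q x + C * norm (Q' - Q) * norm x ^ 2"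
        unfolding C_def by (rule qf_perturb)
      also have "\<dots> \<le> - c * norm x ^ 2 + C * e * norm x ^ 2"
        using qV[OF x] nm C0 nx by (intro add_mono mult_right_mono mult_left_mono) auto
      also have "\<dots> < 0" using Ce nx
        by (metis add.commute diff_less_eq mult_minus_left mult_strict_right_mono add_0_left diff_add_cancel minus_add_cancel)
      finally show "qf Q' x < 0" .
    qed
    then have "dim ?V \<le> card {j. d' j < 0}" by (rule negdef_dim[OF dQ' sV])
    then show "neg_index Q \<le> neg_index Q'"
      using dV neg_index_decomp[OF dQ] neg_index_decomp[OF dQ'] by simp
  qed
  then show ?thesis using epos by blast
qed



lemma Sym_entry: "Q \<in> Sym \<Longrightarrow> Q $ j $ i = Q $ i $ j"
proof -
  assume "Q \<in> Sym"
  then have "transpose Q = Q" by (simp add: Sym_def)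
  then have "transpose Q $ i $ j = Q $ i $ j" by simp
  then show ?thesis by (simp add: transpose_def)
qed

lemma Sym_neg: assumes "Q \<in> Sym" shows "- Q \<in> Sym"
proof -
  have "transpose (-Q) $ i $ j = (-Q) $ i $ j" for i j
    using Sym_entry[OF assms, of i j] by (simp add: transpose_def)
  then show ?thesis unfolding Sym_def by (simp add: vec_eq_iff)
qed

lemma Sym_shift: assumes "Q \<in> Sym" shows "Q - e *\<^sub>R mat 1 \<in> Sym"
proof -
  have "transpose (Q - e *\<^sub>R mat 1) $ i $ j = (Q - e *\<^sub>R mat 1) $ i $ j" for i j
    using Sym_entry[OF assms, of i j] by (simp add: transpose_def mat_def)
  then show ?thesis unfolding Sym_def by (simp add: vec_eq_iff)
qed

lemma index_sum:
  fixes Q :: "real^'n^'n"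
  assumes Q: "Q \<in> Sym"
  shows "neg_index Q + neg_index (-Q) + dim {x. Q *v x = 0} = CARD('n)"
proof -
  obtain P d where oP: "orthogonal_matrix P" and Qe: "Q = P ** diagm d ** transpose P"
    using spectral[OF Q] by blast
  have dQ: "decomp Q P d" using oP Qe by (simp add: decomp_def)
  have "neg_index Q = card {j. d j < 0}" by (rule neg_index_decomp[OF dQ])
  moreover have "neg_index (-Q) = card {j. d j > 0}"
    using neg_index_decomp[OF decomp_neg[OF dQ]] by simp
  moreover have "dim {x. Q *v x = 0} = card {j. d j = 0}" by (rule ker_decomp[OF dQ])
  moreover have "card {j. d j < 0} + card {j. d j > 0} + card {j. d j = 0} = CARD('n)"
  proof -
    have "card ({j. d j < 0} \<union> {j. d j > 0}) = card {j. d j < 0} + card {j. d j > 0}"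
      by (rule card_Un_disjoint) auto
    moreover have "card (({j. d j < 0} \<union> {j. d j > 0}) \<union> {j. d j = 0})
        = card ({j. d j < 0} \<union> {j. d j > 0}) + card {j. d j = 0}"
      by (rule card_Un_disjoint) auto
    moreover have "({j. d j < 0} \<union> {j. d j > 0}) \<union> {j. d j = 0} = UNIV" by auto
    ultimately show ?thesis by simp
  qed
  ultimately show ?thesis by simp
qed

lemma P_closed: "closedin (top_of_set Sym) (P_set j :: (real^'n^'n) set)"
proof -
  have "openin (top_of_set Sym) (Sym - P_set j :: (real^'n^'n) set)"
    unfolding openin_euclidean_subtopology_iff
  proof (intro conjI ballI)
    show "Sym - P_set j \<subseteq> Sym" by blast
    fix Q :: "real^'n^'n" assume Q: "Q \<in> Sym - P_set j"
    then have QS: "Q \<in> Sym" and nQ: "neg_index Q > j" by (auto simp: P_set_def)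
    obtain e where e: "e > 0" "\<forall>Q'\<in>Sym. dist Q' Q < e \<longrightarrow> neg_index Q \<le> neg_index Q'"
      using neg_open[OF QS] by blast
    show "\<exists>e>0. \<forall>x'\<in>Sym. dist x' Q < e \<longrightarrow> x' \<in> Sym - P_set j"
      using e nQ by (intro exI[of _ e]) (auto simp: P_set_def)
  qed
  then show ?thesis unfolding closedin_def by (auto simp: P_set_def)
qed

lemma interior_char:
  fixes Q :: "real^'n^'n"
  assumes Q: "Q \<in> Sym"
  shows "Q \<in> (top_of_set Sym) interior_of (P_set j) \<longleftrightarrow> neg_index Q + dim {x. Q *v x = 0} \<le> j"
proof
  assume QI: "Q \<in> (top_of_set Sym) interior_of (P_set j)"
  let ?I = "(top_of_set Sym) interior_of (P_set j)"
  have "openin (top_of_set Sym) ?I" by (rule openin_interior_of)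
  then have "\<forall>x\<in>?I. \<exists>e>0. \<forall>x'\<in>Sym. dist x' x < e \<longrightarrow> x' \<in> ?I"
    unfolding openin_euclidean_subtopology_iff by (rule conjunct2)
  then have "\<exists>e>0. \<forall>x'\<in>Sym. dist x' Q < e \<longrightarrow> x' \<in> ?I" using QI by (rule bspec)
  then obtain e where e: "e > 0" "\<forall>Q'\<in>Sym. dist Q' Q < e \<longrightarrow> Q' \<in> ?I"
    by (elim exE conjE) simp
  define m where "m = norm (mat 1 :: real^'n^'n)"
  have m0: "m \<ge> 0" unfolding m_def by simp
  define t where "t = e / (2 * (m + 1))"
  have tpos: "t > 0" unfolding t_def using e(1) m0 by simp
  have tm: "t * m < e"
  proof -
    have "t * m \<le> t * (m + 1)" using tpos by simp
    also have "t * (m + 1) = e / 2" unfolding t_def using m0 by (simp add: field_simps)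
    finally show ?thesis using e(1) by simp
  qed
  define Q' where "Q' = Q - t *\<^sub>R mat 1"
  have Q'S: "Q' \<in> Sym" unfolding Q'_def by (rule Sym_shift[OF Q])
  have "Q' - Q = - (t *\<^sub>R mat 1)" unfolding Q'_def by simp
  then have "dist Q' Q = t * m" unfolding m_def dist_norm using tpos
    by (simp only: norm_minus_cancel norm_scaleR abs_of_pos)
  then have "Q' \<in> (top_of_set Sym) interior_of (P_set j)" using e(2) Q'S tm by simp
  then have "Q' \<in> P_set j" by (rule subsetD[OF interior_of_subset])
  then have nQ': "neg_index Q' \<le> j" by (simp add: P_set_def)
  obtain P d where oP: "orthogonal_matrix P" and Qe: "Q = P ** diagm d ** transpose P"
    using spectral[OF Q] by blast
  have dQ: "decomp Q P d" using oP Qe by (simp add: decomp_def)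
  have "neg_index Q' = card {k. d k - t < 0}"
    unfolding Q'_def by (rule neg_index_decomp[OF decomp_shift2[OF dQ]])
  moreover have "card {k. d k < 0} + card {k. d k = 0} \<le> card {k. d k - t < 0}"
  proof -
    have "card {k. d k < 0} + card {k. d k = 0} = card ({k. d k < 0} \<union> {k. d k = 0})"
      by (rule card_Un_disjoint[symmetric]) auto
    also have "\<dots> \<le> card {k. d k - t < 0}" using tpos by (intro card_mono) auto
    finally show ?thesis .
  qed
  ultimately show "neg_index Q + dim {x. Q *v x = 0} \<le> j"
    using nQ' neg_index_decomp[OF dQ] ker_decomp[OF dQ] by linarith
next
  assume le: "neg_index Q + dim {x. Q *v x = 0} \<le> j"
  define T where "T = {Q'::real^'n^'n. Q' \<in> Sym \<and> CARD('n) \<le> j + neg_index (- Q')}"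
  have "openin (top_of_set Sym) T"
    unfolding openin_euclidean_subtopology_iff
  proof (intro conjI ballI)
    show "T \<subseteq> Sym" unfolding T_def by blast
    fix R assume R: "R \<in> T"
    then have RS: "R \<in> Sym" and nR: "CARD('n) \<le> j + neg_index (- R)" by (auto simp: T_def)
    obtain e where e: "e > 0" "\<forall>Q'\<in>Sym. dist Q' (-R) < e \<longrightarrow> neg_index (-R) \<le> neg_index Q'"
      using neg_open[OF Sym_neg[OF RS]] by blast
    have "\<forall>x'\<in>Sym. dist x' R < e \<longrightarrow> x' \<in> T"
    proof (intro ballI impI)
      fix x' assume x': "x' \<in> Sym" "dist x' R < e"
      have "dist (-x') (-R) < e" using x'(2) by (simp add: dist_norm norm_minus_commute)
      then have "neg_index (-R) \<le> neg_index (-x')" using e(2) Sym_neg[OF x'(1)] by blast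
      then show "x' \<in> T" using nR x'(1) by (simp add: T_def)
    qed
    then show "\<exists>e>0. \<forall>x'\<in>Sym. dist x' R < e \<longrightarrow> x' \<in> T" using e(1) by blast
  qed
  moreover have "T \<subseteq> P_set j"
  proof
    fix R assume R: "R \<in> T"
    then have RS: "R \<in> Sym" and nR: "CARD('n) \<le> j + neg_index (- R)" by (auto simp: T_def)
    have "neg_index R + neg_index (-R) + dim {x. R *v x = 0} = CARD('n)" by (rule index_sum[OF RS])
    then show "R \<in> P_set j" using nR RS by (simp add: P_set_def)
  qed
  ultimately have "T \<subseteq> (top_of_set Sym) interior_of (P_set j)" by (rule interior_of_maximal[rotated])
  moreover have "Q \<in> T"
    using index_sum[OF Q] le Q by (simp add: T_def)
  ultimately show "Q \<in> (top_of_set Sym) interior_of (P_set j)" by blast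
qed

lemma A_char:
  fixes Q :: "real^'n^'n"
  assumes Q: "Q \<in> Sym"
  shows "Q \<in> A_set j \<longleftrightarrow> neg_index Q \<le> j \<and> j < neg_index Q + dim {x. Q *v x = 0}"
proof -
  have eq: "A_set j = P_set j - (top_of_set Sym) interior_of (P_set j)"
    unfolding A_set_def frontier_of_def closure_of_closedin[OF P_closed] ..
  have "Q \<in> A_set j \<longleftrightarrow> Q \<in> P_set j \<and> \<not> (neg_index Q + dim {x. Q *v x = 0} \<le> j)"
    unfolding eq by (simp only: Diff_iff interior_char[OF Q])
  also have "Q \<in> P_set j \<longleftrightarrow> neg_index Q \<le> j" using Q by (simp add: P_set_def)
  finally show ?thesis by linarith
qed

theorem proposition4:
  fixes r :: nat
  shows "(Z_set r :: (real^'n^'n) set) =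
    (\<Union>\<alpha>\<in>I_set CARD('n) r. Sym \<inter> (\<Inter>j\<in>\<alpha>. A_set j))"
proof (intro set_eqI iffI)
  fix Q :: "real^'n^'n"
  assume "Q \<in> Z_set r"
  then have Q: "Q \<in> Sym" and z: "r \<le> dim {x. Q *v x = 0}" by (auto simp: Z_set_def)
  let ?a = "neg_index Q"
  have "?a + r \<le> CARD('n)" using index_sum[OF Q] z by linarith
  then have I: "{?a..<?a + r} \<in> I_set CARD('n) r" unfolding I_set_def by blast
  have "\<forall>j\<in>{?a..<?a + r}. Q \<in> A_set j"
  proof
    fix j assume "j \<in> {?a..<?a + r}"
    then have "?a \<le> j" "j < ?a + r" by auto
    then show "Q \<in> A_set j" unfolding A_char[OF Q] using z by linarith
  qed
  then have "Q \<in> Sym \<inter> (\<Inter>j\<in>{?a..<?a + r}. A_set j)" using Q by blast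
  then show "Q \<in> (\<Union>\<alpha>\<in>I_set CARD('n) r. Sym \<inter> (\<Inter>j\<in>\<alpha>. A_set j))" using I by blast
next
  fix Q :: "real^'n^'n"
  assume "Q \<in> (\<Union>\<alpha>\<in>I_set CARD('n) r. Sym \<inter> (\<Inter>j\<in>\<alpha>. A_set j))"
  then obtain \<alpha> where al: "\<alpha> \<in> I_set CARD('n) r" and Qa: "Q \<in> Sym \<inter> (\<Inter>j\<in>\<alpha>. A_set j)"
    by blast
  from al obtain a where a: "\<alpha> = {a..<a + r}" unfolding I_set_def by blast
  have Q: "Q \<in> Sym" using Qa by blast
  have A: "\<forall>j\<in>{a..<a + r}. Q \<in> A_set j" using Qa a by blast
  have "r \<le> dim {x. Q *v x = 0}"
  proof (cases "r = 0")
    case False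
    then have j1: "a \<in> {a..<a+r}" and j2: "a + r - 1 \<in> {a..<a+r}" by auto
    have "neg_index Q \<le> a" using A j1 A_char[OF Q] by blast
    moreover have "a + r - 1 < neg_index Q + dim {x. Q *v x = 0}" using A j2 A_char[OF Q] by blast
    ultimately show ?thesis using False by linarith
  qed simp
  then show "Q \<in> Z_set r" using Q by (simp add: Z_set_def)
qed


end
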